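(* Assume the setting below. For all $k\in\mathbb{N}$ and all integers $i\ge e-1$, $\mu_{k,i}=\mu_{k,i+1}$.
   Context: Let $K$ be a difference field of characteristic $0$, i.e. a field of characteristic $0$ with a field endomorphism $\sigma$. Let $\mathcal{Y}=\{y_1,\ldots,y_n\}$ be difference indeterminates and $K\{\mathcal{Y}\}$ the difference polynomial ring: the polynomial ring over $K$ in the variables $y_j^{(l)}$ ($1\le j\le n$, $l\in\mathbb{N}$), with $\sigma(y_j^{(l)})=y_j^{(l+1)}$. For $f\in K\{\mathcal{Y}\}$ write $f^{(j)}=\sigma^j(f)$. A $\sigma$-ideal is an ideal stable under $\sigma$; it is reflexive if $\sigma(a)\in I$ implies $a\in I$, and $\sigma$-prime if reflexive and prime. Let $\mathcal{Y}^{(k)}=\{y_1^{(k)},\dots,y_n^{(k)}\}$. Let $F=\{f_1,\ldots,f_r\}\subset K\{\mathcal{Y}\}$, $F^{(j)}=\{f_1^{(j)},\dots,f_r^{(j)}\}$, and let $e\ge1$ be the maximal $l$ such that some $y_j^{(l)}$ occurs in $F$. Let $\mathfrak{p}$ be a $\sigma$-prime ideal of $K\{\mathcal{Y}\}$ minimal over the $\sigma$-ideal $[F]$, and let $\kappa$ be the residue field of $\mathfrak{p}$ (the fraction field of $K\{\mathcal{Y}\}/\mathfrak{p}$). For $k\ge1$ and $i\ge e-1$, let $J_{k,i}$ be the $kr\times kn$ matrix $\partial(F^{(i-e+1)},\ldots,F^{(i-e+k)})/\partial(\mathcal{Y}^{(i+1)},\ldots,\mathcal{Y}^{(i+k)})$,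 i.e. its $(a,b)$ block ($1\le a,b\le k$) is the $r\times n$ matrix $(\partial f_l^{(i-e+a)}/\partial y_j^{(i+b)})_{l,j}$. Define $\mu_{0,i}:=0$ and, for $k\ge1$, $\mu_{k,i}:=\dim_\kappa\ker(J_{k,i}^{\tau})=kr-\operatorname{rank}_\kappa(J_{k,i})$, where $J_{k,i}^\tau$ is the transpose and $J_{k,i}$ is considered over $\kappa$ via the images of its entries. *)

theory Defs
  imports "HOL-Library.Poly_Mapping"
begin

text \<open>Difference polynomial ring K{Y}: the indeterminates y_j^(l) are indexed by
  pairs (j, l) with j in a finite type 'v (so n = CARD('v)) and l a natural number.\<close>

type_synonym ('v, 'a) dpoly = "(('v \<times> nat) \<Rightarrow>\<^sub>0 nat) \<Rightarrow>\<^sub>0 'a"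

definition field_endo :: "('a::field \<Rightarrow> 'a) \<Rightarrow> bool" where
  "field_endo s \<longleftrightarrow> (\<forall>x y. s (x + y) = s x + s y) \<and> (\<forall>x y. s (x * y) = s x * s y) \<and> s 1 = 1"

definition shift_monom :: "(('v \<times> nat) \<Rightarrow>\<^sub>0 nat) \<Rightarrow> (('v \<times> nat) \<Rightarrow>\<^sub>0 nat)" where
  "shift_monom m = (\<Sum>v\<in>Poly_Mapping.keys m. Poly_Mapping.single (fst v, Suc (snd v)) (Poly_Mapping.lookup m v))"

definition dsigma :: "('a::field \<Rightarrow> 'a) \<Rightarrow> ('v, 'a) dpoly \<Rightarrow> ('v, 'a) dpoly" where
  "dsigma s f = (\<Sum>m\<in>Poly_Mapping.keys f. Poly_Mapping.single (shift_monom m) (s (Poly_Mapping.lookup f m)))"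

definition pdiff :: "'v \<times> nat \<Rightarrow> ('v, 'a::field) dpoly \<Rightarrow> ('v, 'a) dpoly" where
  "pdiff v f = (\<Sum>m\<in>Poly_Mapping.keys f.
      Poly_Mapping.single (m - Poly_Mapping.single v 1) (of_nat (Poly_Mapping.lookup m v) * Poly_Mapping.lookup f m))"

definition is_ideal :: "('v, 'a::field) dpoly set \<Rightarrow> bool" where
  "is_ideal I \<longleftrightarrow> 0 \<in> I \<and> (\<forall>a\<in>I. \<forall>b\<in>I. a + b \<in> I) \<and> (\<forall>a\<in>I. \<forall>c. c * a \<in> I)"

definition sigma_ideal :: "('a::field \<Rightarrow> 'a) \<Rightarrow> ('v, 'a) dpoly set \<Rightarrow> bool" where
  "sigma_ideal s I \<longleftrightarrow> is_ideal I \<and> (\<forall>a\<in>I. dsigma s a \<in> I)"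

definition reflexive_ideal :: "('a::field \<Rightarrow> 'a) \<Rightarrow> ('v, 'a) dpoly set \<Rightarrow> bool" where
  "reflexive_ideal s I \<longleftrightarrow> (\<forall>a. dsigma s a \<in> I \<longrightarrow> a \<in> I)"

definition prime_ideal :: "('v, 'a::field) dpoly set \<Rightarrow> bool" where
  "prime_ideal I \<longleftrightarrow> is_ideal I \<and> I \<noteq> UNIV \<and> (\<forall>a b. a * b \<in> I \<longrightarrow> a \<in> I \<or> b \<in> I)"

definition sigma_prime :: "('a::field \<Rightarrow> 'a) \<Rightarrow> ('v, 'a) dpoly set \<Rightarrow> bool" where
  "sigma_prime s P \<longleftrightarrow> sigma_ideal s P \<and> reflexive_ideal s P \<and> prime_ideal P"

definition sigma_ideal_gen :: "('a::field \<Rightarrow> 'a) \<Rightarrow> ('v, 'a) dpoly set \<Rightarrow> ('v, 'a) dpoly set" where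
  "sigma_ideal_gen s F = \<Inter> {I. sigma_ideal s I \<and> F \<subseteq> I}"

definition minimal_sigma_prime_over :: "('a::field \<Rightarrow> 'a) \<Rightarrow> ('v, 'a) dpoly set \<Rightarrow> ('v, 'a) dpoly set \<Rightarrow> bool" where
  "minimal_sigma_prime_over s F P \<longleftrightarrow> sigma_prime s P \<and> sigma_ideal_gen s F \<subseteq> P \<and>
     (\<forall>Q. sigma_prime s Q \<and> sigma_ideal_gen s F \<subseteq> Q \<and> Q \<subseteq> P \<longrightarrow> Q = P)"

definition is_max_order :: "('v, 'a::field) dpoly list \<Rightarrow> nat \<Rightarrow> bool" where
  "is_max_order fs e \<longleftrightarrow>
     (\<exists>f\<in>set fs. \<exists>m\<in>Poly_Mapping.keys f. \<exists>j. Poly_Mapping.lookup m (j, e) \<noteq> 0) \<and>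
     (\<forall>f\<in>set fs. \<forall>m\<in>Poly_Mapping.keys f. \<forall>j l. Poly_Mapping.lookup m (j, l) \<noteq> 0 \<longrightarrow> l \<le> e)"

text \<open>Entries of J_{k,i}: row index (a, l) with 1 \<le> a \<le> k and l < r (the l-th element
  of F, 0-based), column index (b, j) with 1 \<le> b \<le> k and j :: 'v; the entry is
  the partial derivative of f_l^(i-e+a) with respect to y_j^(i+b).\<close>
definition jac_entry :: "('a::field \<Rightarrow> 'a) \<Rightarrow> ('v, 'a) dpoly list \<Rightarrow> nat \<Rightarrow> nat
    \<Rightarrow> nat \<times> nat \<Rightarrow> nat \<times> 'v \<Rightarrow> ('v, 'a) dpoly" where
  "jac_entry s fs e i rw cl =
     pdiff (snd cl, i + fst cl) ((dsigma s ^^ (i + fst rw - e)) (fs ! snd rw))"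

definition jac_rows :: "nat \<Rightarrow> nat \<Rightarrow> (nat \<times> nat) set" where
  "jac_rows k r = {1..k} \<times> {..<r}"

definition jac_cols :: "nat \<Rightarrow> (nat \<times> 'v) set" where
  "jac_cols k = {1..k} \<times> UNIV"

text \<open>A set S of rows of a matrix M (with entries in K{Y}) is linearly independent over
  the domain K{Y}/P: every combination with coefficients in K{Y} that vanishes modulo P
  has all coefficients in P.  Since K{Y}/P is a domain with fraction field kappa, this
  is linear independence of the image rows over kappa.\<close>
definition rows_indep_mod :: "('v, 'a::field) dpoly set \<Rightarrow> 'r set \<Rightarrow> 'c set
    \<Rightarrow> ('r \<Rightarrow> 'c \<Rightarrow> ('v, 'a) dpoly) \<Rightarrow> bool" where
  "rows_indep_mod P S C M \<longleftrightarrow>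
     (\<forall>c. (\<forall>col\<in>C. (\<Sum>x\<in>S. c x * M x col) \<in> P) \<longrightarrow> (\<forall>x\<in>S. c x \<in> P))"

definition rank_mod :: "('v, 'a::field) dpoly set \<Rightarrow> 'r set \<Rightarrow> 'c set
    \<Rightarrow> ('r \<Rightarrow> 'c \<Rightarrow> ('v, 'a) dpoly) \<Rightarrow> nat" where
  "rank_mod P R C M = Max (card ` {S. S \<subseteq> R \<and> rows_indep_mod P S C M})"

definition mu :: "('a::field \<Rightarrow> 'a) \<Rightarrow> ('v, 'a) dpoly list \<Rightarrow> nat \<Rightarrow> ('v, 'a) dpoly set
    \<Rightarrow> nat \<Rightarrow> nat \<Rightarrow> nat" where
  "mu s fs e P k i = k * length fs -
     rank_mod P (jac_rows k (length fs)) (jac_cols k :: (nat \<times> 'v) set) (jac_entry s fs e i)"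

end

theory Submission
  imports Defs
begin


lemma ideal_neg: "is_ideal P \<Longrightarrow> a \<in> P \<Longrightarrow> - a \<in> P"
  unfolding is_ideal_def by (metis mult_minus1)

lemma ideal_add: "is_ideal P \<Longrightarrow> a \<in> P \<Longrightarrow> b \<in> P \<Longrightarrow> a + b \<in> P"
  unfolding is_ideal_def by blast

lemma ideal_diff: "is_ideal P \<Longrightarrow> a \<in> P \<Longrightarrow> b \<in> P \<Longrightarrow> a - b \<in> P"
  by (metis ideal_add ideal_neg diff_conv_add_uminus)

lemma ideal_mult: "is_ideal P \<Longrightarrow> a \<in> P \<Longrightarrow> c * a \<in> P"
  unfolding is_ideal_def by blast

lemma ideal_mult2: "is_ideal P \<Longrightarrow> a \<in> P \<Longrightarrow> a * c \<in> P"
  unfolding is_ideal_def by (metis mult.commute)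

lemma ideal_sum:
  assumes "is_ideal P" "\<forall>x\<in>T. c x \<in> P"
  shows "(\<Sum>x\<in>T. c x * g x) \<in> P"
  using assms(2)
proof (induction T rule: infinite_finite_induct)
  case (infinite A) then show ?case using assms(1) unfolding is_ideal_def by simp
next
  case empty then show ?case using assms(1) unfolding is_ideal_def by simp
next
  case (insert x F) then show ?case using assms(1) by (simp add: ideal_add ideal_mult2)
qed

lemma key_fwd:
  fixes P :: "('v, 'a::field) dpoly set"
  assumes I: "is_ideal P" and pr: "\<And>a b. a * b \<in> P \<Longrightarrow> a \<in> P \<or> b \<in> P"
    and fin: "finite S" and x0: "x0 \<in> S" and c0: "col0 \<in> C" and pP: "M x0 col0 \<notin> P"
    and ind: "rows_indep_mod P S C M"
  shows "rows_indep_mod P (S - {x0}) C (\<lambda>x col. M x0 col0 * M x col - M x col0 * M x0 col)"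
  unfolding rows_indep_mod_def
proof (intro allI impI ballI)
  fix d x
  let ?p = "M x0 col0"
  assume H: "\<forall>col\<in>C. (\<Sum>x\<in>S - {x0}. d x * (?p * M x col - M x col0 * M x0 col)) \<in> P"
    and x: "x \<in> S - {x0}"
  define c where "c = (\<lambda>x. if x = x0 then - (\<Sum>y\<in>S - {x0}. d y * M y col0) else ?p * d x)"
  have "\<forall>col\<in>C. (\<Sum>x\<in>S. c x * M x col) \<in> P"
  proof
    fix col assume col: "col \<in> C"
    have "(\<Sum>x\<in>S. c x * M x col) = c x0 * M x0 col + (\<Sum>x\<in>S - {x0}. c x * M x col)"
      using fin x0 by (simp add: sum.remove)
    also have "(\<Sum>x\<in>S - {x0}. c x * M x col) = (\<Sum>x\<in>S - {x0}. ?p * (d x * M x col))"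
      by (rule sum.cong) (auto simp: c_def)
    also have "\<dots> = ?p * (\<Sum>x\<in>S - {x0}. d x * M x col)" by (simp add: sum_distrib_left)
    also have "c x0 * M x0 col + ?p * (\<Sum>x\<in>S - {x0}. d x * M x col) =
       (\<Sum>x\<in>S - {x0}. d x * (?p * M x col - M x col0 * M x0 col))"
      by (simp add: c_def sum_subtractf sum_distrib_left sum_distrib_right algebra_simps)
    finally show "(\<Sum>x\<in>S. c x * M x col) \<in> P" using H col by simp
  qed
  with ind have "c x \<in> P" using x unfolding rows_indep_mod_def by blast
  hence "?p * d x \<in> P" using x by (simp add: c_def)
  thus "d x \<in> P" using pr pP by blast
qed

lemma key_bwd:
  fixes P :: "('v, 'a::field) dpoly set"
  assumes I: "is_ideal P" and pr: "\<And>a b. a * b \<in> P \<Longrightarrow> a \<in> P \<or> b \<in> P"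
    and fin: "finite S" and x0: "x0 \<in> S" and c0: "col0 \<in> C" and pP: "M x0 col0 \<notin> P"
    and ind: "rows_indep_mod P (S - {x0}) C (\<lambda>x col. M x0 col0 * M x col - M x col0 * M x0 col)"
  shows "rows_indep_mod P S C M"
  unfolding rows_indep_mod_def
proof (intro allI impI)
  fix c
  let ?p = "M x0 col0"
  assume H: "\<forall>col\<in>C. (\<Sum>x\<in>S. c x * M x col) \<in> P"
  define A where "A = (\<lambda>col. \<Sum>x\<in>S. c x * M x col)"
  have Aeq: "A col = c x0 * M x0 col + (\<Sum>x\<in>S - {x0}. c x * M x col)" for col
    using fin x0 by (simp add: A_def sum.remove)
  have "\<forall>col\<in>C. (\<Sum>x\<in>S - {x0}. c x * (?p * M x col - M x col0 * M x0 col)) \<in> P"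
  proof
    fix col assume col: "col \<in> C"
    have "(\<Sum>x\<in>S - {x0}. c x * (?p * M x col - M x col0 * M x0 col))
       = ?p * (\<Sum>x\<in>S - {x0}. c x * M x col) - (\<Sum>x\<in>S - {x0}. c x * M x col0) * M x0 col"
      by (simp add: sum_subtractf sum_distrib_left sum_distrib_right algebra_simps)
    also have "\<dots> = ?p * A col - A col0 * M x0 col"
      by (simp add: Aeq algebra_simps)
    finally show "(\<Sum>x\<in>S - {x0}. c x * (?p * M x col - M x col0 * M x0 col)) \<in> P"
      using H col c0 I by (simp add: A_def ideal_diff ideal_mult ideal_mult2)
  qed
  with ind have S': "\<forall>x\<in>S - {x0}. c x \<in> P" unfolding rows_indep_mod_def by blast
  have "(\<Sum>x\<in>S - {x0}. c x * M x col0) \<in> P"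
    using S' I by (simp add: ideal_sum)
  hence "A col0 - (\<Sum>x\<in>S - {x0}. c x * M x col0) \<in> P"
    using H c0 I by (simp add: A_def ideal_diff)
  hence "c x0 * ?p \<in> P" by (simp add: Aeq)
  hence "c x0 \<in> P" using pr pP by blast
  with S' show "\<forall>x\<in>S. c x \<in> P" by blast
qed


lemma indep_empty: "rows_indep_mod P {} C M"
  unfolding rows_indep_mod_def by simp

lemma indep_pivot:
  fixes P :: "('v, 'a::field) dpoly set"
  assumes I: "is_ideal P" and one: "1 \<notin> P" and fin: "finite S" and x0: "x0 \<in> S"
    and ind: "rows_indep_mod P S C M"
  shows "\<exists>col0\<in>C. M x0 col0 \<notin> P"
proof (rule ccontr)
  assume "\<not> ?thesis"
  hence all: "\<forall>col\<in>C. M x0 col \<in> P" by blast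
  define c where "c = (\<lambda>x. if x = x0 then (1::('v, 'a) dpoly) else 0)"
  have "\<forall>col\<in>C. (\<Sum>x\<in>S. c x * M x col) \<in> P"
  proof
    fix col assume "col \<in> C"
    have "(\<Sum>x\<in>S. c x * M x col) = M x0 col"
      proof -
      have "(\<Sum>x\<in>S. c x * M x col) = (\<Sum>x\<in>S. if x = x0 then M x col else 0)"
        by (rule sum.cong) (auto simp: c_def)
      also have "\<dots> = M x0 col" using fin x0 by (simp add: sum.delta)
      finally show ?thesis .
    qed
    thus "(\<Sum>x\<in>S. c x * M x col) \<in> P" using all \<open>col \<in> C\<close> by simp
  qed
  with ind x0 have "c x0 \<in> P" unfolding rows_indep_mod_def by blast
  with one show False by (simp add: c_def)
qed

lemma indep_hom_fwd:
  fixes P :: "('v, 'a::field) dpoly set"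
  assumes I: "is_ideal P" and pr: "\<And>a b. a * b \<in> P \<Longrightarrow> a \<in> P \<or> b \<in> P" and one: "1 \<notin> P"
    and hadd: "\<And>a b. \<phi> (a + b) = \<phi> a + \<phi> b" and hmul: "\<And>a b. \<phi> (a * b) = \<phi> a * \<phi> b"
    and refl: "\<And>a. \<phi> a \<in> P \<Longrightarrow> a \<in> P"
  shows "finite S \<Longrightarrow> rows_indep_mod P S C M \<Longrightarrow> rows_indep_mod P S C (\<lambda>x col. \<phi> (M x col))"
proof (induction "card S" arbitrary: S M rule: less_induct)
  case less
  have hdiff: "\<phi> (a - b) = \<phi> a - \<phi> b" for a b
    by (metis add_diff_cancel eq_diff_eq hadd)
  show ?case
  proof (cases "S = {}")
    case True then show ?thesis by (simp add: indep_empty)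
  next
    case False
    then obtain x0 where x0: "x0 \<in> S" by blast
    obtain col0 where c0: "col0 \<in> C" and pP: "M x0 col0 \<notin> P"
      using indep_pivot[OF I one less.prems(1) x0 less.prems(2)] by blast
    let ?M' = "\<lambda>x col. M x0 col0 * M x col - M x col0 * M x0 col"
    have i1: "rows_indep_mod P (S - {x0}) C ?M'"
      by (rule key_fwd[OF I pr less.prems(1) x0 c0 pP less.prems(2)])
    have "card (S - {x0}) < card S" using less.prems(1) x0 by (meson card_Diff1_less)
    hence i2: "rows_indep_mod P (S - {x0}) C (\<lambda>x col. \<phi> (?M' x col))"
      using less.hyps[of "S - {x0}" ?M'] i1 less.prems(1) by simp
    have pP': "\<phi> (M x0 col0) \<notin> P" using pP refl by blast
    have eqM: "(\<lambda>x col. \<phi> (?M' x col)) = (\<lambda>x col. \<phi> (M x0 col0) * \<phi> (M x col) - \<phi> (M x col0) * \<phi> (M x0 col))"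
      by (simp add: hdiff hmul)
    have i3: "rows_indep_mod P (S - {x0}) C (\<lambda>x col. \<phi> (M x0 col0) * \<phi> (M x col) - \<phi> (M x col0) * \<phi> (M x0 col))"
      using i2 unfolding eqM .
    show ?thesis
      by (rule key_bwd[where M="\<lambda>x col. \<phi> (M x col)", OF I pr less.prems(1) x0 c0 pP' i3])
  qed
qed

lemma hom_sum:
  assumes hadd: "\<And>a b. \<phi> (a + b) = \<phi> a + \<phi> b"
  shows "\<phi> (\<Sum>x\<in>T. g x) = (\<Sum>x\<in>T. \<phi> (g x :: 'b::ab_group_add) :: 'c::ab_group_add)"
proof -
  have h0: "\<phi> 0 = 0" by (metis add_cancel_right_right add_0 hadd)
  show ?thesis
    by (induction T rule: infinite_finite_induct) (simp_all add: h0 hadd)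
qed

lemma indep_hom_bwd:
  fixes P :: "('v, 'a::field) dpoly set"
  assumes I: "is_ideal P"
    and hadd: "\<And>a b. \<phi> (a + b) = \<phi> a + \<phi> b" and hmul: "\<And>a b. \<phi> (a * b) = \<phi> a * \<phi> b"
    and hP: "\<And>a. a \<in> P \<Longrightarrow> \<phi> a \<in> P" and refl: "\<And>a. \<phi> a \<in> P \<Longrightarrow> a \<in> P"
    and ind: "rows_indep_mod P S C (\<lambda>x col. \<phi> (M x col))"
  shows "rows_indep_mod P S C M"
  unfolding rows_indep_mod_def
proof (intro allI impI ballI)
  fix c x assume H: "\<forall>col\<in>C. (\<Sum>x\<in>S. c x * M x col) \<in> P" and x: "x \<in> S"
  have "\<forall>col\<in>C. (\<Sum>x\<in>S. \<phi> (c x) * \<phi> (M x col)) \<in> P"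
  proof
    fix col assume "col \<in> C"
    have "\<phi> (\<Sum>x\<in>S. c x * M x col) \<in> P" using H hP \<open>col \<in> C\<close> by blast
    thus "(\<Sum>x\<in>S. \<phi> (c x) * \<phi> (M x col)) \<in> P" by (simp add: hom_sum[of \<phi>, OF hadd] hmul)
  qed
  with spec[OF ind[unfolded rows_indep_mod_def], of "\<lambda>x. \<phi> (c x)"] x
  have "\<phi> (c x) \<in> P" by simp
  thus "c x \<in> P" by (rule refl)
qed



definition phi :: "('k \<Rightarrow> 'l) \<Rightarrow> ('k \<Rightarrow> 'b::zero \<Rightarrow> 'c::comm_monoid_add) \<Rightarrow> ('k \<Rightarrow>\<^sub>0 'b) \<Rightarrow> ('l \<Rightarrow>\<^sub>0 'c)" where
  "phi g h f = (\<Sum>k\<in>Poly_Mapping.keys f. Poly_Mapping.single (g k) (h k (Poly_Mapping.lookup f k)))"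

lemma phi_add:
  assumes "\<And>k. h k 0 = 0" "\<And>k a b. h k (a + b) = h k a + h k b"
  shows "phi g h (p + q) = phi g h p + phi g h q"
  unfolding phi_def
  by (rule setsum_keys_plus_distrib[where f="\<lambda>k v. Poly_Mapping.single (g k) (h k v)"])
     (simp_all add: assms single_add)

lemma phi_single:
  assumes "\<And>k. h k 0 = 0"
  shows "phi g h (Poly_Mapping.single k c) = Poly_Mapping.single (g k) (h k c)"
  unfolding phi_def by (cases "c = 0") (simp_all add: assms)

lemma lookup_phi_inj:
  assumes "inj g" "\<And>k. h k 0 = 0"
  shows "Poly_Mapping.lookup (phi g h f) (g k) = h k (Poly_Mapping.lookup f k)"
proof -
  have "Poly_Mapping.lookup (phi g h f) (g k) =
      (\<Sum>k'\<in>Poly_Mapping.keys f. if k' = k then h k' (Poly_Mapping.lookup f k') else 0)"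
    unfolding phi_def lookup_sum
    by (rule sum.cong) (auto simp: lookup_single when_def dest: injD[OF assms(1)])
  also have "\<dots> = h k (Poly_Mapping.lookup f k)"
    by (simp add: sum.delta in_keys_iff assms(2))
  finally show ?thesis .
qed

lemma lookup_phi_notin:
  assumes "y \<notin> range g"
  shows "Poly_Mapping.lookup (phi g h f) y = 0"
  unfolding phi_def lookup_sum using assms
  by (intro sum.neutral) (auto simp: lookup_single when_def)

lemma pm_expansion: "f = (\<Sum>k\<in>Poly_Mapping.keys f. Poly_Mapping.single k (Poly_Mapping.lookup f k))"
proof -
  have "f = phi id (\<lambda>_ v. v) f"
    by (rule poly_mapping_eqI) (metis id_apply inj_on_id lookup_phi_inj)
  thus ?thesis by (simp add: phi_def)
qed

lemma shift_phi: "shift_monom m = phi (\<lambda>v. (fst v, Suc (snd v))) (\<lambda>_ v. v) m"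
  unfolding shift_monom_def phi_def ..

lemma dsigma_phi: "dsigma s f = phi shift_monom (\<lambda>_ v. s v) f"
  unfolding dsigma_def phi_def ..

lemma pdiff_phi: "pdiff v f = phi (\<lambda>m. m - Poly_Mapping.single v 1) (\<lambda>m c. of_nat (Poly_Mapping.lookup m v) * c) f"
  unfolding pdiff_def phi_def ..

lemma inj_shiftv: "inj (\<lambda>v::'v \<times> nat. (fst v, Suc (snd v)))"
  by (auto simp: inj_def prod_eq_iff)

lemma lookup_shift_Suc: "Poly_Mapping.lookup (shift_monom m) (j, Suc l) = Poly_Mapping.lookup m (j, l)"
  using lookup_phi_inj[OF inj_shiftv, of "\<lambda>_ v. v" m "(j, l)"] by (simp add: shift_phi)

lemma lookup_shift_0: "Poly_Mapping.lookup (shift_monom m) (j, 0) = 0"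
  unfolding shift_phi by (rule lookup_phi_notin) auto

lemma shift_add: "shift_monom (a + b) = shift_monom a + shift_monom b"
  unfolding shift_phi by (rule phi_add) auto

lemma inj_shift: "inj shift_monom"
proof (rule injI)
  fix a b :: "('v \<times> nat) \<Rightarrow>\<^sub>0 nat"
  assume "shift_monom a = shift_monom b"
  hence "Poly_Mapping.lookup a (j, l) = Poly_Mapping.lookup b (j, l)" for j l
    by (metis lookup_shift_Suc)
  thus "a = b" by (intro poly_mapping_eqI) (metis prod.collapse)
qed

lemma shift_minus: "shift_monom (m - Poly_Mapping.single (j, l) 1) = shift_monom m - Poly_Mapping.single (j, Suc l) 1"
proof (rule poly_mapping_eqI)
  fix v :: "'a \<times> nat"
  obtain j' l' where v: "v = (j', l')" by fastforce
  show "Poly_Mapping.lookup (shift_monom (m - Poly_Mapping.single (j, l) 1)) v =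
        Poly_Mapping.lookup (shift_monom m - Poly_Mapping.single (j, Suc l) 1) v"
    by (cases l') (auto simp: v lookup_shift_0 lookup_shift_Suc lookup_minus lookup_single when_def)
qed

context
  fixes s :: "'a::field \<Rightarrow> 'a"
  assumes fe: "field_endo s"
begin

lemma s_add: "s (a + b) = s a + s b" using fe by (simp add: field_endo_def)
lemma s_mult: "s (a * b) = s a * s b" using fe by (simp add: field_endo_def)
lemma s_0: "s 0 = 0" by (metis add_cancel_right_right s_add)
lemma s_of_nat: "s (of_nat n) = of_nat n"
  using fe by (induction n) (simp_all add: s_0 s_add field_endo_def)

lemma dsigma_add: "dsigma s (f + g) = dsigma s f + dsigma s g"
  unfolding dsigma_phi by (rule phi_add) (simp_all add: s_0 s_add)

lemma dsigma_single: "dsigma s (Poly_Mapping.single m c) = Poly_Mapping.single (shift_monom m) (s c)"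
  unfolding dsigma_phi by (rule phi_single) (simp add: s_0)

lemma dsigma_0: "dsigma s 0 = 0"
  by (metis add_cancel_right_right dsigma_add)

lemma dsigma_sum: "dsigma s (\<Sum>x\<in>A. F x) = (\<Sum>x\<in>A. dsigma s (F x))"
  by (induction A rule: infinite_finite_induct) (simp_all add: dsigma_0 dsigma_add)

lemma dsigma_mult: "dsigma s (f * g) = dsigma s f * dsigma s g"
proof -
  let ?F = "\<lambda>m. Poly_Mapping.single m (Poly_Mapping.lookup f m)"
  let ?G = "\<lambda>n. Poly_Mapping.single n (Poly_Mapping.lookup g n)"
  have "f * g = (\<Sum>m\<in>Poly_Mapping.keys f. ?F m) * (\<Sum>n\<in>Poly_Mapping.keys g. ?G n)"
    by (metis pm_expansion)
  also have "\<dots> = (\<Sum>m\<in>Poly_Mapping.keys f. \<Sum>n\<in>Poly_Mapping.keys g. ?F m * ?G n)"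
    by (simp add: sum_product)
  finally have fg: "f * g = \<dots>" .
  have "dsigma s f * dsigma s g = dsigma s (\<Sum>m\<in>Poly_Mapping.keys f. ?F m) * dsigma s (\<Sum>n\<in>Poly_Mapping.keys g. ?G n)"
    by (metis pm_expansion)
  also have "\<dots> = (\<Sum>m\<in>Poly_Mapping.keys f. \<Sum>n\<in>Poly_Mapping.keys g. dsigma s (?F m) * dsigma s (?G n))"
    by (simp add: dsigma_sum sum_product)
  also have "\<dots> = (\<Sum>m\<in>Poly_Mapping.keys f. \<Sum>n\<in>Poly_Mapping.keys g. dsigma s (?F m * ?G n))"
    by (simp add: dsigma_single mult_single shift_add s_mult)
  also have "\<dots> = dsigma s (f * g)"
    by (simp add: fg dsigma_sum)
  finally show ?thesis ..
qed

lemma pdiff_add: "pdiff v (f + g) = pdiff v f + pdiff v g"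
  unfolding pdiff_phi by (rule phi_add) (simp_all add: distrib_left)

lemma pdiff_single: "pdiff v (Poly_Mapping.single m c) =
   Poly_Mapping.single (m - Poly_Mapping.single v 1) (of_nat (Poly_Mapping.lookup m v) * c)"
  unfolding pdiff_phi by (rule phi_single) simp

lemma pdiff_0: "pdiff v 0 = 0"
  by (metis add_cancel_right_right pdiff_add)

lemma pdiff_sum: "pdiff v (\<Sum>x\<in>A. F x) = (\<Sum>x\<in>A. pdiff v (F x))"
  by (induction A rule: infinite_finite_induct) (simp_all add: pdiff_0 pdiff_add)

lemma pdiff_dsigma: "pdiff (j, Suc l) (dsigma s f) = dsigma s (pdiff (j, l) f)"
proof -
  let ?F = "\<lambda>m. Poly_Mapping.single m (Poly_Mapping.lookup f m)"
  have "pdiff (j, Suc l) (dsigma s f) = pdiff (j, Suc l) (dsigma s (\<Sum>m\<in>Poly_Mapping.keys f. ?F m))"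
    by (metis pm_expansion)
  also have "\<dots> = (\<Sum>m\<in>Poly_Mapping.keys f. pdiff (j, Suc l) (dsigma s (?F m)))"
    by (simp add: dsigma_sum pdiff_sum)
  also have "\<dots> = (\<Sum>m\<in>Poly_Mapping.keys f. dsigma s (pdiff (j, l) (?F m)))"
    by (simp add: dsigma_single pdiff_single shift_minus[unfolded One_nat_def] lookup_shift_Suc s_mult s_of_nat)
  also have "\<dots> = dsigma s (pdiff (j, l) (\<Sum>m\<in>Poly_Mapping.keys f. ?F m))"
    by (simp add: dsigma_sum pdiff_sum)
  also have "\<dots> = dsigma s (pdiff (j, l) f)"
    by (metis pm_expansion)
  finally show ?thesis .
qed

end


lemma rank_cong:
  assumes "\<forall>x\<in>R. \<forall>col\<in>C. M1 x col = M2 x col"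
  shows "rank_mod P R C M1 = rank_mod P R C M2"
proof -
  have "rows_indep_mod P S C M1 = rows_indep_mod P S C M2" if "S \<subseteq> R" for S
  proof -
    have "(\<Sum>x\<in>S. c x * M1 x col) = (\<Sum>x\<in>S. c x * M2 x col)" if "col \<in> C" for c col
      using assms \<open>S \<subseteq> R\<close> that by (intro sum.cong) auto
    thus ?thesis unfolding rows_indep_mod_def by auto
  qed
  hence "{S. S \<subseteq> R \<and> rows_indep_mod P S C M1} = {S. S \<subseteq> R \<and> rows_indep_mod P S C M2}" by blast
  thus ?thesis unfolding rank_mod_def by simp
qed

lemma rank_hom:
  fixes P :: "('v, 'a::field) dpoly set"
  assumes fin: "finite R" and I: "is_ideal P" and pr: "\<And>a b. a * b \<in> P \<Longrightarrow> a \<in> P \<or> b \<in> P" and one: "1 \<notin> P"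
    and hadd: "\<And>a b. \<phi> (a + b) = \<phi> a + \<phi> b" and hmul: "\<And>a b. \<phi> (a * b) = \<phi> a * \<phi> b"
    and hP: "\<And>a. a \<in> P \<Longrightarrow> \<phi> a \<in> P" and refl: "\<And>a. \<phi> a \<in> P \<Longrightarrow> a \<in> P"
  shows "rank_mod P R C (\<lambda>x col. \<phi> (M x col)) = rank_mod P R C M"
proof -
  have "rows_indep_mod P S C (\<lambda>x col. \<phi> (M x col)) = rows_indep_mod P S C M" if "S \<subseteq> R" for S
  proof
    assume "rows_indep_mod P S C (\<lambda>x col. \<phi> (M x col))"
    thus "rows_indep_mod P S C M" using indep_hom_bwd[where \<phi>=\<phi> and M=M and P=P, OF I hadd hmul hP refl] by blast
  next
    assume "rows_indep_mod P S C M"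
    moreover have "finite S" using fin that by (rule finite_subset[rotated])
    ultimately show "rows_indep_mod P S C (\<lambda>x col. \<phi> (M x col))"
      by (intro indep_hom_fwd[OF I pr one hadd hmul refl])
  qed
  hence "{S. S \<subseteq> R \<and> rows_indep_mod P S C (\<lambda>x col. \<phi> (M x col))} = {S. S \<subseteq> R \<and> rows_indep_mod P S C M}" by blast
  thus ?thesis unfolding rank_mod_def by simp
qed


lemma entry_shift:
  assumes fe: "field_endo s" and rw: "rw \<in> jac_rows k r" and i: "e - 1 \<le> i"
  shows "jac_entry s fs e (i + 1) rw cl = dsigma s (jac_entry s fs e i rw cl)"
proof -
  obtain a l where rwe: "rw = (a, l)" and a: "1 \<le> a" using rw by (auto simp: jac_rows_def)
  have n: "Suc (i + a) - e = Suc (i + a - e)" using a i by arith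
  have "jac_entry s fs e (i + 1) rw cl = pdiff (snd cl, Suc (i + fst cl)) ((dsigma s ^^ Suc (i + a - e)) (fs ! l))"
    by (simp add: jac_entry_def rwe n)
  also have "\<dots> = pdiff (snd cl, Suc (i + fst cl)) (dsigma s ((dsigma s ^^ (i + a - e)) (fs ! l)))"
    by (simp only: funpow.simps(2) o_apply)
  also have "\<dots> = dsigma s (pdiff (snd cl, i + fst cl) ((dsigma s ^^ (i + a - e)) (fs ! l)))"
    by (rule pdiff_dsigma[OF fe])
  also have "\<dots> = dsigma s (jac_entry s fs e i rw cl)"
    by (simp add: jac_entry_def rwe)
  finally show ?thesis .
qed

theorem mainTheorem4:
  fixes s :: "'a::field_char_0 \<Rightarrow> 'a"
    and fs :: "('v::finite, 'a) dpoly list"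
    and e :: nat
    and P :: "('v, 'a) dpoly set"
  assumes "field_endo s"
    and "is_max_order fs e"
    and "e \<ge> 1"
    and "minimal_sigma_prime_over s (set fs) P"
  shows "\<forall>k i. i \<ge> e - 1 \<longrightarrow> mu s fs e P k i = mu s fs e P k (i + 1)"
proof (intro allI impI)
  fix k i assume i: "e - 1 \<le> i"
  have sp: "sigma_prime s P" using assms(4) by (simp add: minimal_sigma_prime_over_def)
  have I: "is_ideal P" and hP: "\<And>a. a \<in> P \<Longrightarrow> dsigma s a \<in> P"
    and refl: "\<And>a. dsigma s a \<in> P \<Longrightarrow> a \<in> P" and ne: "P \<noteq> UNIV"
    and pr: "\<And>a b. a * b \<in> P \<Longrightarrow> a \<in> P \<or> b \<in> P"
    using sp unfolding sigma_prime_def sigma_ideal_def reflexive_ideal_def prime_ideal_def by blast+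
  have one: "1 \<notin> P"
  proof
    assume "1 \<in> P"
    hence "c * 1 \<in> P" for c by (rule ideal_mult[OF I])
    thus False using ne by auto
  qed
  let ?R = "jac_rows k (length fs)" and ?C = "jac_cols k :: (nat \<times> 'v) set"
  have finR: "finite ?R" by (simp add: jac_rows_def)
  have "rank_mod P ?R ?C (jac_entry s fs e (i + 1)) = rank_mod P ?R ?C (\<lambda>rw cl. dsigma s (jac_entry s fs e i rw cl))"
    by (rule rank_cong) (intro ballI entry_shift[OF assms(1) _ i])
  also have "\<dots> = rank_mod P ?R ?C (jac_entry s fs e i)"
    by (rule rank_hom[OF finR I pr one dsigma_add[OF assms(1)] dsigma_mult[OF assms(1)] hP refl])
  finally show "mu s fs e P k i = mu s fs e P k (i + 1)"
    unfolding mu_def by simp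
qed


end
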